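(* Consider $\dot x=f(x,u)$ with $x\in\mathbb{R}^n$, $f:\mathbb{R}^n\times\mathbb{R}^m\to\mathbb{R}^n$ continuous, $f(0,0)=0$, and suppose $V:\mathbb{R}^n\to\mathbb{R}_{\ge0}$ is a FxT-ISS Lyapunov function for this system. Let $\sigma\in\mathcal{K}_\infty$ have the form $\sigma(s)=\sum_{i=1}^nc_is^{r_i}$ with $1\le r_1<r_2<\dots<r_n$ and real $c_i\neq0$, and suppose $\sigma'(s)>0$ for all $s>0$. Then $\tilde V(x)=\sigma(V(x))$ is a FxT-ISS Lyapunov function for the system.
   Context: $\mathcal{K}_\infty$: continuous strictly increasing unbounded $\alpha:\mathbb{R}_{\ge0}\to\mathbb{R}_{\ge0}$ with $\alpha(0)=0$. $\mathcal{K}_{\mathrm{FxT}}$: functions $c_1s^{p_1}+c_2s^{p_2}$ with $c_1,c_2>0$, $p_1\in(0,1)$, $p_2>1$. A locally Lipschitz $V:\mathbb{R}^n\to\mathbb{R}_{\ge0}$ is a FxT-ISS Lyapunov function for $\dot x=f(x,u)$ if there exist $\underline\alpha,\overline\alpha,\chi\in\mathcal{K}_\infty$ and $\Psi\in\mathcal{K}_{\mathrm{FxT}}$ such that $\underline\alpha(|x|)\le V(x)\le\overline\alpha(|x|)$ for all $x$, and for all $x\in\mathbb{R}^n$, $u\in\mathbb{R}^m$: $V(x)\ge\chi(|u|)\implies DV(x;f(x,u))\le-\Psi(V(x))$, where $DV(x;v)=\limsup_{h\to0^+}\frac{V(x+hv)-V(x)}{h}$. *)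

theory Defs
  imports "HOL-Analysis.Analysis"
begin

definition class_K_inf :: "(real \<Rightarrow> real) \<Rightarrow> bool" where
  "class_K_inf \<alpha> \<longleftrightarrow> continuous_on {0..} \<alpha> \<and> strict_mono_on {0..} \<alpha> \<and> \<alpha> 0 = 0
     \<and> (\<forall>M. \<exists>s\<ge>0. M < \<alpha> s)"

definition class_K_FxT :: "(real \<Rightarrow> real) \<Rightarrow> bool" where
  "class_K_FxT \<Psi> \<longleftrightarrow> (\<exists>c1 c2 p1 p2. c1 > 0 \<and> c2 > 0 \<and> 0 < p1 \<and> p1 < 1 \<and> p2 > 1 \<and>
     \<Psi> = (\<lambda>s. c1 * s powr p1 + c2 * s powr p2))"

definition locally_lipschitz :: "('a::metric_space \<Rightarrow> 'b::metric_space) \<Rightarrow> bool" where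
  "locally_lipschitz V \<longleftrightarrow> (\<forall>x. \<exists>U. open U \<and> x \<in> U \<and> (\<exists>L. L-lipschitz_on U V))"

definition dini_deriv :: "('a::real_vector \<Rightarrow> real) \<Rightarrow> 'a \<Rightarrow> 'a \<Rightarrow> ereal" where
  "dini_deriv V x v = Limsup (at_right 0) (\<lambda>h. ereal ((V (x + h *\<^sub>R v) - V x) / h))"

definition FxT_ISS_Lyapunov ::
  "('a::real_normed_vector \<Rightarrow> 'b::real_normed_vector \<Rightarrow> 'a) \<Rightarrow> ('a \<Rightarrow> real) \<Rightarrow> bool" where
  "FxT_ISS_Lyapunov f V \<longleftrightarrow> locally_lipschitz V \<and> (\<forall>x. V x \<ge> 0) \<and>
     (\<exists>\<alpha>l \<alpha>u gain \<Psi>. class_K_inf \<alpha>l \<and> class_K_inf \<alpha>u \<and> class_K_inf gain \<and> class_K_FxT \<Psi> \<and>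
        (\<forall>x. \<alpha>l (norm x) \<le> V x \<and> V x \<le> \<alpha>u (norm x)) \<and>
        (\<forall>x u. V x \<ge> gain (norm u) \<longrightarrow> dini_deriv V x (f x u) \<le> ereal (- \<Psi> (V x))))"

end

theory Submission
  imports Defs
begin

lemma dini_chain_pos:
  fixes V :: "'a::real_normed_vector \<Rightarrow> real"
  assumes tV: "((\<lambda>h. V (x + h *\<^sub>R v)) \<longlongrightarrow> V x) (at_right 0)"
    and dS: "DERIV \<sigma> (V x) :> D" and Dpos: "D > 0"
    and dV: "dini_deriv V x v \<le> ereal L"
  shows "dini_deriv (\<lambda>y. \<sigma> (V y)) x v \<le> ereal (D * L)"
proof -
  obtain g where g: "\<forall>z. \<sigma> z - \<sigma> (V x) = g z * (z - V x)" "isCont g (V x)" "g (V x) = D"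
    using CARAT_DERIV dS by blast
  have tg: "((\<lambda>h. g (V (x + h *\<^sub>R v))) \<longlongrightarrow> D) (at_right 0)"
    using isCont_tendsto_compose[OF g(2) tV] g(3) by simp
  have eq: "(\<sigma> (V (x + h *\<^sub>R v)) - \<sigma> (V x)) / h
      = g (V (x + h *\<^sub>R v)) * ((V (x + h *\<^sub>R v) - V x) / h)" for h
    using g(1) by simp
  show ?thesis unfolding dini_deriv_def
  proof (rule ereal_le_epsilon2)
    fix e :: real assume e: "e > 0"
    define d1 where "d1 = min 1 (e / (2 * D))"
    define d2 where "d2 = min (D/2) (e / (2 * (\<bar>L\<bar> + 1)))"
    have d1: "d1 > 0" "d1 \<le> 1" "D * d1 \<le> e/2" using e Dpos
      by (auto simp: d1_def min_def field_simps)
    have "e / (2 * (\<bar>L\<bar> + 1)) > 0" using e by (simp add: add_pos_nonneg)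
    moreover have "D/2 > 0" using Dpos by simp
    ultimately have d2a1: "d2 > 0" unfolding d2_def by simp
    have d2a2: "d2 \<le> D/2" unfolding d2_def by (rule min.cobounded1)
    have d2a3: "d2 \<le> e / (2 * (\<bar>L\<bar> + 1))" unfolding d2_def by (rule min.cobounded2)
    note d2a = d2a1 d2a2 d2a3
    have "d2 * (\<bar>L\<bar> + 1) \<le> e / (2 * (\<bar>L\<bar> + 1)) * (\<bar>L\<bar> + 1)"
      using d2a(3) by (rule mult_right_mono) simp
    also have "\<dots> = e/2" by (simp add: field_simps)
    finally have d2: "d2 > 0" "d2 \<le> D/2" "d2 * (\<bar>L\<bar> + 1) \<le> e/2" using d2a(1,2) by blast+
    have "Limsup (at_right 0) (\<lambda>h. ereal ((V (x + h *\<^sub>R v) - V x) / h)) < ereal (L + d1)"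
      using order_le_less_trans[OF dV[unfolded dini_deriv_def], of "ereal (L + d1)"] d1 by simp
    hence ev1: "eventually (\<lambda>h. ereal ((V (x + h *\<^sub>R v) - V x) / h) < ereal (L + d1)) (at_right 0)"
      by (rule Limsup_lessD)
    have ev2: "eventually (\<lambda>h. dist (g (V (x + h *\<^sub>R v))) D < d2) (at_right 0)"
      using tendstoD[OF tg d2(1)] .
    have ev3: "eventually (\<lambda>h::real. h > 0) (at_right 0)"
      by (simp add: eventually_at_right_less)
    have "eventually (\<lambda>h. ereal ((\<sigma> (V (x + h *\<^sub>R v)) - \<sigma> (V x)) / h) \<le> ereal (D * L) + ereal e) (at_right 0)"
      using ev1 ev2 ev3
    proof eventually_elim
      case (elim h)
      define G where "G = g (V (x + h *\<^sub>R v))"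
      define q where "q = (V (x + h *\<^sub>R v) - V x) / h"
      have q: "q < L + d1" using elim(1) q_def by simp
      have G: "\<bar>G - D\<bar> < d2" using elim(2) G_def by (simp add: dist_real_def)
      have Gp: "G > 0" using G d2 by linarith
      have "G * q \<le> G * (L + d1)" using Gp q by simp
      also have "\<dots> = D * (L + d1) + (G - D) * (L + d1)" by (simp add: algebra_simps)
      also have "(G - D) * (L + d1) \<le> d2 * (\<bar>L\<bar> + 1)"
      proof -
        have "(G - D) * (L + d1) \<le> \<bar>G - D\<bar> * \<bar>L + d1\<bar>" unfolding abs_mult[symmetric] by (rule abs_ge_self)
        also have "\<dots> \<le> d2 * (\<bar>L\<bar> + 1)"
        proof (rule mult_mono)
          show "\<bar>G - D\<bar> \<le> d2" using G by (rule less_imp_le)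
          show "\<bar>L + d1\<bar> \<le> \<bar>L\<bar> + 1" using d1 abs_triangle_ineq[of L d1] by simp
          show "0 \<le> d2" using d2(1) by (rule less_imp_le)
          show "0 \<le> \<bar>L + d1\<bar>" by (rule abs_ge_zero)
        qed
        finally show ?thesis .
      qed
      finally have "G * q \<le> D * L + D * d1 + d2 * (\<bar>L\<bar> + 1)" by (simp add: algebra_simps)
      hence "G * q \<le> D * L + e" using d1 d2 by linarith
      moreover have "(\<sigma> (V (x + h *\<^sub>R v)) - \<sigma> (V x)) / h = G * q"
        using eq[of h] unfolding G_def q_def .
      ultimately show ?case by simp
    qed
    hence "Limsup (at_right 0) (\<lambda>h. ereal ((\<sigma> (V (x + h *\<^sub>R v)) - \<sigma> (V x)) / h)) \<le> ereal (D * L) + ereal e"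
      by (rule Limsup_bounded)
    thus "Limsup (at_right 0) (\<lambda>h. ereal ((\<sigma> (V (x + h *\<^sub>R v)) - \<sigma> (V x)) / h)) \<le> ereal (D * L) + ereal e" .
  qed
qed

lemma dini_chain_zero:
  fixes V :: "'a::real_normed_vector \<Rightarrow> real"
  assumes tV: "((\<lambda>h. V (x + h *\<^sub>R v)) \<longlongrightarrow> V x) (at_right 0)"
    and V0: "V x = 0" and Vnn: "\<And>y. V y \<ge> 0"
    and s0: "\<sigma> 0 = 0" and K: "K \<ge> 0" "\<And>y. 0 \<le> y \<Longrightarrow> y \<le> 1 \<Longrightarrow> \<sigma> y \<le> K * y"
    and dV: "dini_deriv V x v \<le> ereal 0"
  shows "dini_deriv (\<lambda>y. \<sigma> (V y)) x v \<le> ereal 0"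
  unfolding dini_deriv_def
proof (rule ereal_le_epsilon2)
  fix e :: real assume e: "e > 0"
  define d1 where "d1 = e / (K + 1)"
  have d1: "d1 > 0" "K * d1 \<le> e" using e K by (auto simp: d1_def field_simps)
  have "Limsup (at_right 0) (\<lambda>h. ereal ((V (x + h *\<^sub>R v) - V x) / h)) < ereal d1"
    using order_le_less_trans[OF dV[unfolded dini_deriv_def], of "ereal d1"] d1 by simp
  hence ev1: "eventually (\<lambda>h. ereal ((V (x + h *\<^sub>R v) - V x) / h) < ereal d1) (at_right 0)"
    by (rule Limsup_lessD)
  have ev2: "eventually (\<lambda>h. dist (V (x + h *\<^sub>R v)) (V x) < 1) (at_right 0)"
    using tendstoD[OF tV, of 1] by simp
  have ev3: "eventually (\<lambda>h::real. h > 0) (at_right 0)"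
    by (simp add: eventually_at_right_less)
  have "eventually (\<lambda>h. ereal ((\<sigma> (V (x + h *\<^sub>R v)) - \<sigma> (V x)) / h) \<le> ereal 0 + ereal e) (at_right 0)"
    using ev1 ev2 ev3
  proof eventually_elim
    case (elim h)
    define y where "y = V (x + h *\<^sub>R v)"
    have y: "0 \<le> y" "y \<le> 1" using Vnn[of "x + h *\<^sub>R v"] elim(2) V0 by (auto simp: y_def dist_real_def)
    have q: "y / h < d1" using elim(1) V0 y_def by simp
    have "\<sigma> y / h \<le> K * y / h" using K(2)[OF y] elim(3) by (simp add: divide_right_mono)
    also have "\<dots> = K * (y / h)" by simp
    also have "\<dots> \<le> K * d1" by (rule mult_left_mono[OF less_imp_le[OF q] K(1)])
    finally have "\<sigma> y / h \<le> e" using d1 by linarith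
    thus ?case using V0 s0 y_def by simp
  qed
  hence "Limsup (at_right 0) (\<lambda>h. ereal ((\<sigma> (V (x + h *\<^sub>R v)) - \<sigma> (V x)) / h)) \<le> ereal 0 + ereal e"
    by (rule Limsup_bounded)
  thus "Limsup (at_right 0) (\<lambda>h. ereal ((\<sigma> (V (x + h *\<^sub>R v)) - \<sigma> (V x)) / h)) \<le> ereal 0 + ereal e" .
qed

definition sgm :: "nat \<Rightarrow> (nat \<Rightarrow> real) \<Rightarrow> (nat \<Rightarrow> real) \<Rightarrow> real \<Rightarrow> real" where
  "sgm N c r s = (\<Sum>i<N. c i * s powr r i)"
definition dsg :: "nat \<Rightarrow> (nat \<Rightarrow> real) \<Rightarrow> (nat \<Rightarrow> real) \<Rightarrow> real \<Rightarrow> real" where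
  "dsg N c r s = (\<Sum>i<N. c i * r i * s powr (r i - 1))"

context
  fixes N :: nat and c r :: "nat \<Rightarrow> real"
  assumes rge1: "\<And>i. i < N \<Longrightarrow> r i \<ge> 1"
begin

lemma sgm_deriv: "s > 0 \<Longrightarrow> DERIV (sgm N c r) s :> dsg N c r s"
  unfolding sgm_def[abs_def] dsg_def
  by (auto intro!: derivative_eq_intros DERIV_sum simp: algebra_simps)

lemma sgm_cont: "continuous_on {0..} (sgm N c r)"
  unfolding sgm_def[abs_def]
proof (intro continuous_on_sum continuous_on_mult continuous_on_const)
  fix i assume "i \<in> {..<N}"
  hence "r i \<ge> 1" using rge1 by auto
  thus "continuous_on {0..} (\<lambda>x. x powr r i)"
    by (intro continuous_on_powr') (auto intro: continuous_on_id)
qed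

lemma sgm_lip: "M \<ge> 0 \<Longrightarrow> \<exists>K\<ge>0. K-lipschitz_on {0..M} (sgm N c r)"
proof -
  assume M: "M \<ge> 0"
  define K where "K = (\<Sum>i<N. \<bar>c i\<bar> * r i * (M + 1) powr (r i - 1))"
  have Kge: "K \<ge> 0" unfolding K_def
  proof (intro sum_nonneg)
    fix i assume "i \<in> {..<N}"
    hence "r i \<ge> 1" using rge1 by auto
    thus "0 \<le> \<bar>c i\<bar> * r i * (M + 1) powr (r i - 1)" by simp
  qed
  have dbound: "\<bar>dsg N c r z\<bar> \<le> K" if z: "0 < z" "z \<le> M" for z
  proof -
    have "\<bar>dsg N c r z\<bar> \<le> (\<Sum>i<N. \<bar>c i * r i * z powr (r i - 1)\<bar>)"
      unfolding dsg_def by (rule sum_abs)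
    also have "\<dots> \<le> K" unfolding K_def
    proof (rule sum_mono)
      fix i assume "i \<in> {..<N}"
      hence ri: "r i \<ge> 1" using rge1 by auto
      have "z powr (r i - 1) \<le> (M + 1) powr (r i - 1)"
        using ri z by (intro powr_mono2) auto
      hence "\<bar>c i\<bar> * r i * z powr (r i - 1) \<le> \<bar>c i\<bar> * r i * (M + 1) powr (r i - 1)"
        using ri by (intro mult_left_mono) auto
      moreover have "\<bar>c i * r i * z powr (r i - 1)\<bar> = \<bar>c i\<bar> * r i * z powr (r i - 1)"
        using ri by (simp add: abs_mult)
      ultimately show "\<bar>c i * r i * z powr (r i - 1)\<bar> \<le> \<bar>c i\<bar> * r i * (M + 1) powr (r i - 1)"
        by simp
    qed
    finally show ?thesis .
  qed
  have "K-lipschitz_on {0..M} (sgm N c r)"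
  proof (rule lipschitz_on_leI)
    fix x y assume x: "x \<in> {0..M}" and y: "y \<in> {0..M}" and xy: "x \<le> y"
    show "dist (sgm N c r x) (sgm N c r y) \<le> K * dist x y"
    proof (cases "x = y")
      case True thus ?thesis by simp
    next
      case False
      hence lt: "x < y" using xy by simp
      have "continuous_on {x..y} (sgm N c r)"
        using x by (intro continuous_on_subset[OF sgm_cont]) auto
      moreover have "sgm N c r differentiable (at z)" if "x < z" "z < y" for z
        using sgm_deriv[of z] that x real_differentiable_def by force
      ultimately obtain l z where z: "x < z" "z < y" "DERIV (sgm N c r) z :> l"
        and eq: "sgm N c r y - sgm N c r x = (y - x) * l"
        using MVT[OF lt] by blast
      have "l = dsg N c r z" using DERIV_unique[OF z(3) sgm_deriv] z x by auto
      hence "\<bar>l\<bar> \<le> K" using dbound[of z] z x y by auto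
      have "dist (sgm N c r x) (sgm N c r y) = (y - x) * \<bar>l\<bar>"
      proof -
        have "dist (sgm N c r x) (sgm N c r y) = \<bar>sgm N c r y - sgm N c r x\<bar>"
          by (simp add: dist_real_def abs_minus_commute)
        also have "\<dots> = \<bar>y - x\<bar> * \<bar>l\<bar>" unfolding eq abs_mult ..
        finally show ?thesis using lt by simp
      qed
      also have "\<dots> \<le> (y - x) * K" using \<open>\<bar>l\<bar> \<le> K\<close> lt by (intro mult_left_mono) auto
      also have "\<dots> = K * dist x y" using lt by (simp add: dist_real_def)
      finally show ?thesis .
    qed
  qed (rule Kge)
  thus ?thesis using Kge by blast
qed

end
lemma pos_min01:
  fixes e :: "real \<Rightarrow> real"
  assumes ce: "continuous_on {0..1} e" and pe: "\<And>t. 0 < t \<Longrightarrow> t \<le> 1 \<Longrightarrow> e t > 0"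
    and e0: "e 0 \<noteq> 0"
  shows "\<exists>m>0. \<forall>t\<in>{0..1}. m \<le> e t"
proof -
  have "(e \<longlongrightarrow> e 0) (at 0 within {0..1})"
    using ce unfolding continuous_on_def by auto
  hence lim: "(e \<longlongrightarrow> e 0) (at_right 0)" by (simp add: at_within_Icc_at_right)
  have ev: "eventually (\<lambda>t. 0 \<le> e t) (at_right (0::real))"
    by (rule eventually_at_rightI[of _ 1]) (auto intro: less_imp_le pe)
  have "0 \<le> e 0" by (rule tendsto_lowerbound[OF lim ev]) simp
  hence e0p: "e 0 > 0" using e0 by simp
  have pos: "t \<in> {0..1} \<Longrightarrow> e t > 0" for t
    using pe[of t] e0p by (cases "t = 0") auto
  obtain x where x: "x \<in> {0..1}" "\<forall>y\<in>{0..1}. e x \<le> e y"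
    using continuous_attains_inf[OF compact_Icc _ ce] by auto
  thus ?thesis using pos[OF x(1)] by blast
qed

context
  fixes N :: nat and c r :: "nat \<Rightarrow> real"
  assumes rge1: "\<And>i. i < N \<Longrightarrow> r i \<ge> 1"
    and Npos: "N > 0"
    and r_incr: "\<And>i j. i < j \<Longrightarrow> j < N \<Longrightarrow> r i < r j"
    and c_nz: "\<And>i. i < N \<Longrightarrow> c i \<noteq> 0"
    and dpos: "\<And>s. s > 0 \<Longrightarrow> dsg N c r s > 0"
begin

lemma dsg_low0: "\<exists>m>0. \<forall>s. 0 < s \<and> s \<le> 1 \<longrightarrow> m * s powr (r 0 - 1) \<le> dsg N c r s"
proof -
  define e where "e t = c 0 * r 0 + (\<Sum>i\<in>{1..<N}. c i * r i * t powr (r i - r 0))" for t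
  have split: "dsg N c r t = c 0 * r 0 * t powr (r 0 - 1) + (\<Sum>i\<in>{1..<N}. c i * r i * t powr (r i - 1))" for t
    unfolding dsg_def lessThan_atLeast0 using sum.atLeast_Suc_lessThan[OF Npos] by simp
  have eq: "dsg N c r t = e t * t powr (r 0 - 1)" if t: "t > 0" for t
  proof -
    have "e t * t powr (r 0 - 1) = c 0 * r 0 * t powr (r 0 - 1) + (\<Sum>i\<in>{1..<N}. c i * r i * (t powr (r i - r 0) * t powr (r 0 - 1)))"
      unfolding e_def distrib_right sum_distrib_right by (simp add: mult.assoc)
    also have "\<dots> = dsg N c r t" unfolding split
      by (simp add: powr_add[symmetric])
    finally show ?thesis ..
  qed
  have ce: "continuous_on {0..1} e" unfolding e_def
  proof (intro continuous_on_add continuous_on_const continuous_on_sum continuous_on_mult)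
    fix i assume "i \<in> {1..<N}"
    hence "r i - r 0 > 0" using r_incr[of 0 i] by auto
    thus "continuous_on {0..1} (\<lambda>x. x powr (r i - r 0))"
      by (intro continuous_on_powr') (auto intro: continuous_on_id)
  qed
  have pe: "e t > 0" if "0 < t" "t \<le> 1" for t
  proof -
    have "dsg N c r t > 0" using dpos that by simp
    moreover have "t powr (r 0 - 1) > 0" using that by simp
    ultimately show ?thesis using eq[of t] that by (simp add: zero_less_mult_iff)
  qed
  have "e 0 = c 0 * r 0" unfolding e_def by simp
  hence e0: "e 0 \<noteq> 0" using c_nz[OF Npos] rge1[OF Npos] by simp
  obtain m where m: "m > 0" "\<forall>t\<in>{0..1}. m \<le> e t" using pos_min01[OF ce pe e0] by blast
  have "m * s powr (r 0 - 1) \<le> dsg N c r s" if "0 < s" "s \<le> 1" for s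
    using eq[of s] m(2) that by (simp add: mult_right_mono)
  thus ?thesis using m(1) by blast
qed

lemma dsg_lowinf: "\<exists>m>0. \<forall>s. 1 \<le> s \<longrightarrow> m * s powr (r (N - 1) - 1) \<le> dsg N c r s"
proof -
  obtain n0 where N: "N = Suc n0" using Npos gr0_implies_Suc by blast
  define b where "b = r n0"
  have bN: "r (N - 1) = b" unfolding b_def N by simp
  define f where "f t = c n0 * r n0 + (\<Sum>i<n0. c i * r i * t powr (b - r i))" for t
  have split: "dsg N c r t = c n0 * r n0 * t powr (b - 1) + (\<Sum>i<n0. c i * r i * t powr (r i - 1))" for t
    unfolding dsg_def N b_def by simp
  have trm: "(1 / s) powr a * s powr d = s powr (d - a)" if "s > 0" for s a d :: real
    using that by (simp add: powr_divide powr_diff)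
  have eq: "dsg N c r s = f (1 / s) * s powr (b - 1)" if s: "s > 0" for s
  proof -
    have "f (1 / s) * s powr (b - 1) = c n0 * r n0 * s powr (b - 1) + (\<Sum>i<n0. c i * r i * ((1 / s) powr (b - r i) * s powr (b - 1)))"
      unfolding f_def distrib_right sum_distrib_right by (simp add: mult.assoc)
    also have "\<dots> = dsg N c r s" unfolding split trm[OF s] by simp
    finally show ?thesis ..
  qed
  have ce: "continuous_on {0..1} f" unfolding f_def
  proof (intro continuous_on_add continuous_on_const continuous_on_sum continuous_on_mult)
    fix i assume "i \<in> {..<n0}"
    hence "b - r i > 0" using r_incr[of i n0] unfolding b_def N by auto
    thus "continuous_on {0..1} (\<lambda>x. x powr (b - r i))"
      by (intro continuous_on_powr') (auto intro: continuous_on_id)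
  qed
  have pe: "f t > 0" if "0 < t" "t \<le> 1" for t
  proof -
    have "dsg N c r (1 / t) > 0" using dpos that by simp
    moreover have "(1 / t) powr (b - 1) > 0" using that by simp
    ultimately show ?thesis using eq[of "1 / t"] that by (simp add: zero_less_mult_iff)
  qed
  have "f 0 = c n0 * r n0" unfolding f_def by simp
  hence e0: "f 0 \<noteq> 0" using c_nz[of n0] rge1[of n0] N by simp
  obtain m where m: "m > 0" "\<forall>t\<in>{0..1}. m \<le> f t" using pos_min01[OF ce pe e0] by blast
  have "m * s powr (b - 1) \<le> dsg N c r s" if "1 \<le> s" for s
  proof -
    have "m \<le> f (1 / s)" using m(2) that by simp
    thus ?thesis using eq[of s] that by (simp add: mult_right_mono)
  qed
  thus ?thesis using m(1) bN by auto
qed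

lemma sgm_up: 
  defines "C \<equiv> (\<Sum>i<N. \<bar>c i\<bar>)"
  shows "\<And>s. 0 \<le> s \<Longrightarrow> s \<le> 1 \<Longrightarrow> sgm N c r s \<le> C * s powr (r 0)"
    and "\<And>s. 1 \<le> s \<Longrightarrow> sgm N c r s \<le> C * s powr (r (N - 1))"
    and "C > 0"
proof -
  have le_abs: "sgm N c r s \<le> (\<Sum>i<N. \<bar>c i\<bar> * s powr r i)" for s
    unfolding sgm_def by (intro sum_mono) (simp add: mult_right_mono)
  show "sgm N c r s \<le> C * s powr (r 0)" if "0 \<le> s" "s \<le> 1" for s
  proof -
    have "(\<Sum>i<N. \<bar>c i\<bar> * s powr r i) \<le> (\<Sum>i<N. \<bar>c i\<bar> * s powr r 0)"
    proof (intro sum_mono mult_left_mono)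
      fix i assume "i \<in> {..<N}"
      hence "r 0 \<le> r i" using r_incr[of 0 i] by (cases "i = 0") auto
      thus "s powr r i \<le> s powr r 0" using that by (intro powr_mono') auto
    qed simp
    thus ?thesis using le_abs[of s] unfolding C_def sum_distrib_right by linarith
  qed
  show "sgm N c r s \<le> C * s powr (r (N - 1))" if "1 \<le> s" for s
  proof -
    have "(\<Sum>i<N. \<bar>c i\<bar> * s powr r i) \<le> (\<Sum>i<N. \<bar>c i\<bar> * s powr r (N - 1))"
    proof (intro sum_mono mult_left_mono)
      fix i assume "i \<in> {..<N}"
      hence "i < N - 1 \<or> i = N - 1" by auto
      hence "r i \<le> r (N - 1)" using r_incr[of i "N - 1"] Npos by (auto simp del: One_nat_def)
      thus "s powr r i \<le> s powr r (N - 1)" using that by (intro powr_mono) auto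
    qed simp
    thus ?thesis using le_abs[of s] unfolding C_def sum_distrib_right by linarith
  qed
  have "\<bar>c 0\<bar> \<le> C" unfolding C_def using Npos by (intro member_le_sum) auto
  moreover have "\<bar>c 0\<bar> > 0" using c_nz[OF Npos] by simp
  ultimately show "C > 0" by linarith
qed

lemma psi_exists:
  assumes snn: "\<And>s. 0 \<le> s \<Longrightarrow> 0 \<le> sgm N c r s"
    and c1: "c1 > 0" and c2: "c2 > 0" and p1: "0 < p1" "p1 < 1" and p2: "p2 > 1"
  shows "\<exists>e q1 q2. e > 0 \<and> 0 < q1 \<and> q1 < 1 \<and> q2 > 1 \<and>
     (\<forall>s>0. e * sgm N c r s powr q1 + e * sgm N c r s powr q2
        \<le> dsg N c r s * (c1 * s powr p1 + c2 * s powr p2))"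
proof -
  define a where "a = r 0"
  define b where "b = r (N - 1)"
  have a1: "a \<ge> 1" unfolding a_def using rge1[OF Npos] .
  have b1: "b \<ge> 1" unfolding b_def using rge1[of "N - 1"] Npos by simp
  define q1 where "q1 = (a - 1 + p1) / a"
  define q2 where "q2 = (b - 1 + p2) / b"
  have aq1: "a * q1 = a - 1 + p1" unfolding q1_def using a1 by simp
  have bq2: "b * q2 = b - 1 + p2" unfolding q2_def using b1 by simp
  have q1: "0 < q1" "q1 < 1" unfolding q1_def using a1 p1 by (auto simp: field_simps)
  have q2: "q2 > 1" unfolding q2_def using b1 p2 by (auto simp: field_simps)
  obtain m1 where m1: "m1 > 0" "\<And>s. 0 < s \<Longrightarrow> s \<le> 1 \<Longrightarrow> m1 * s powr (a - 1) \<le> dsg N c r s"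
    using dsg_low0 unfolding a_def by blast
  obtain m2 where m2: "m2 > 0" "\<And>s. 1 \<le> s \<Longrightarrow> m2 * s powr (b - 1) \<le> dsg N c r s"
    using dsg_lowinf unfolding b_def by blast
  define C where "C = (\<Sum>i<N. \<bar>c i\<bar>)"
  have Cu0: "\<And>s. 0 \<le> s \<Longrightarrow> s \<le> 1 \<Longrightarrow> sgm N c r s \<le> C * s powr a"
    and Cui: "\<And>s. 1 \<le> s \<Longrightarrow> sgm N c r s \<le> C * s powr b" and Cp: "C > 0"
    using sgm_up unfolding C_def a_def b_def by auto
  define K where "K = C powr q1 + C powr q2"
  have Kp: "K > 0" unfolding K_def using Cp by (simp add: add_pos_pos)
  define e where "e = min (m1 * c1) (m2 * c2) / K"
  have ep: "e > 0" unfolding e_def using m1 m2 c1 c2 Kp by simp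
  have eK1: "e * K \<le> m1 * c1" and eK2: "e * K \<le> m2 * c2"
    unfolding e_def using Kp by auto
  have bound: "e * sgm N c r s powr q1 + e * sgm N c r s powr q2
        \<le> dsg N c r s * (c1 * s powr p1 + c2 * s powr p2)" if s: "s > 0" for s
  proof -
    define S where "S = sgm N c r s"
    define D where "D = dsg N c r s"
    have S0: "S \<ge> 0" unfolding S_def using snn s by simp
    have D0: "D > 0" unfolding D_def using dpos s by simp
    have psi1: "c1 * s powr p1 \<le> c1 * s powr p1 + c2 * s powr p2" using c2 by simp
    have psi2: "c2 * s powr p2 \<le> c1 * s powr p1 + c2 * s powr p2" using c1 by simp
    show ?thesis
    proof (cases "s \<le> 1")
      case True
      define E where "E = a - 1 + p1"
      have SC: "S \<le> C * s powr a" unfolding S_def using Cu0 s True by simp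
      have "S powr q1 \<le> (C * s powr a) powr q1" using SC S0 q1 by (intro powr_mono2) auto
      also have "\<dots> = C powr q1 * s powr E" unfolding powr_mult powr_powr E_def aq1[symmetric] by simp
      finally have S1: "S powr q1 \<le> C powr q1 * s powr E" .
      have "S powr q2 \<le> (C * s powr a) powr q2" using SC S0 q2 by (intro powr_mono2) auto
      also have "\<dots> = C powr q2 * s powr (a * q2)" unfolding powr_mult powr_powr by simp
      also have "\<dots> \<le> C powr q2 * s powr E"
      proof (intro mult_left_mono powr_mono')
        show "E \<le> a * q2" unfolding E_def using a1 q2 p1
          by (smt (verit) mult_le_cancel_left1)
      qed (use s True in auto)
      finally have S2: "S powr q2 \<le> C powr q2 * s powr E" .
      have "e * S powr q1 + e * S powr q2 \<le> e * (K * s powr E)"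
      proof -
        have "e * S powr q1 + e * S powr q2 \<le> e * (C powr q1 * s powr E) + e * (C powr q2 * s powr E)"
          using S1 S2 ep by (intro add_mono mult_left_mono) auto
        also have "\<dots> = e * (K * s powr E)" unfolding K_def by (simp add: algebra_simps)
        finally show ?thesis .
      qed
      also have "\<dots> = (e * K) * s powr E" by simp
      also have "\<dots> \<le> (m1 * c1) * s powr E" using eK1 by (intro mult_right_mono) auto
      also have "\<dots> = (m1 * s powr (a - 1)) * (c1 * s powr p1)"
      proof -
        have "s powr E = s powr (a - 1) * s powr p1" unfolding E_def by (rule powr_add)
        thus ?thesis by (simp add: mult_ac)
      qed
      also have "\<dots> \<le> D * (c1 * s powr p1)"
        using m1(2)[OF s True] c1 unfolding D_def by (intro mult_right_mono) auto
      also have "\<dots> \<le> D * (c1 * s powr p1 + c2 * s powr p2)"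
        using D0 psi1 by (intro mult_left_mono) auto
      finally show ?thesis unfolding S_def D_def .
    next
      case False
      hence s1: "s \<ge> 1" by simp
      define E where "E = b - 1 + p2"
      have SC: "S \<le> C * s powr b" unfolding S_def using Cui s1 by simp
      have "S powr q2 \<le> (C * s powr b) powr q2" using SC S0 q2 by (intro powr_mono2) auto
      also have "\<dots> = C powr q2 * s powr E" unfolding powr_mult powr_powr E_def bq2[symmetric] by simp
      finally have S2: "S powr q2 \<le> C powr q2 * s powr E" .
      have "S powr q1 \<le> (C * s powr b) powr q1" using SC S0 q1 by (intro powr_mono2) auto
      also have "\<dots> = C powr q1 * s powr (b * q1)" unfolding powr_mult powr_powr by simp
      also have "\<dots> \<le> C powr q1 * s powr E"
      proof (intro mult_left_mono powr_mono)
        show "b * q1 \<le> E" unfolding E_def using b1 q1 p2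
          by (smt (verit) mult_le_cancel_left1)
      qed (use s1 in auto)
      finally have S1: "S powr q1 \<le> C powr q1 * s powr E" .
      have "e * S powr q1 + e * S powr q2 \<le> e * (K * s powr E)"
      proof -
        have "e * S powr q1 + e * S powr q2 \<le> e * (C powr q1 * s powr E) + e * (C powr q2 * s powr E)"
          using S1 S2 ep by (intro add_mono mult_left_mono) auto
        also have "\<dots> = e * (K * s powr E)" unfolding K_def by (simp add: algebra_simps)
        finally show ?thesis .
      qed
      also have "\<dots> = (e * K) * s powr E" by simp
      also have "\<dots> \<le> (m2 * c2) * s powr E" using eK2 by (intro mult_right_mono) auto
      also have "\<dots> = (m2 * s powr (b - 1)) * (c2 * s powr p2)"
      proof -
        have "s powr E = s powr (b - 1) * s powr p2" unfolding E_def by (rule powr_add)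
        thus ?thesis by (simp add: mult_ac)
      qed
      also have "\<dots> \<le> D * (c2 * s powr p2)"
        using m2(2)[OF s1] c2 unfolding D_def by (intro mult_right_mono) auto
      also have "\<dots> \<le> D * (c1 * s powr p1 + c2 * s powr p2)"
        using D0 psi2 by (intro mult_left_mono) auto
      finally show ?thesis unfolding S_def D_def .
    qed
  qed
  show ?thesis using ep q1 q2 bound by blast
qed

end

lemma Kinf_comp:
  assumes s: "class_K_inf \<sigma>" and a: "class_K_inf \<alpha>"
  shows "class_K_inf (\<lambda>s. \<sigma> (\<alpha> s))"
proof -
  have sc: "continuous_on {0..} \<sigma>" "strict_mono_on {0..} \<sigma>" "\<sigma> 0 = 0" "\<forall>M. \<exists>s\<ge>0. M < \<sigma> s"
    using s unfolding class_K_inf_def by auto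
  have ac: "continuous_on {0..} \<alpha>" "strict_mono_on {0..} \<alpha>" "\<alpha> 0 = 0" "\<forall>M. \<exists>s\<ge>0. M < \<alpha> s"
    using a unfolding class_K_inf_def by auto
  have anng: "\<alpha> x \<ge> 0" if "x \<ge> 0" for x
    using strict_mono_on_leD[OF ac(2), of 0 x] that ac(3) by simp
  have "continuous_on {0..} (\<lambda>s. \<sigma> (\<alpha> s))"
    by (rule continuous_on_compose2[OF sc(1) ac(1)]) (auto intro: anng)
  moreover have "strict_mono_on {0..} (\<lambda>s. \<sigma> (\<alpha> s))"
  proof (rule strict_mono_onI)
    fix x y :: real assume "x \<in> {0..}" "y \<in> {0..}" "x < y"
    hence "\<alpha> x < \<alpha> y" "\<alpha> x \<in> {0..}" "\<alpha> y \<in> {0..}" using strict_mono_onD[OF ac(2)] anng by auto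
    thus "\<sigma> (\<alpha> x) < \<sigma> (\<alpha> y)" using strict_mono_onD[OF sc(2)] by blast
  qed
  moreover have "\<exists>s\<ge>0. M < \<sigma> (\<alpha> s)" for M
  proof -
    obtain t where t: "t \<ge> 0" "M < \<sigma> t" using sc(4) by blast
    obtain u where u: "u \<ge> 0" "t < \<alpha> u" using ac(4) by blast
    have "\<sigma> t < \<sigma> (\<alpha> u)" using strict_mono_onD[OF sc(2), of t "\<alpha> u"] t u anng by auto
    thus ?thesis using t u by (intro exI[of _ u]) auto
  qed
  ultimately show ?thesis unfolding class_K_inf_def using sc(3) ac(3) by auto
qed

lemma loclip_isCont:
  assumes "locally_lipschitz V" shows "isCont V x"
proof -
  obtain U L where U: "open U" "x \<in> U" "L-lipschitz_on U V"
    using assms unfolding locally_lipschitz_def by blast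
  have "continuous_on U V" using U(3) by (rule lipschitz_on_continuous_on)
  thus ?thesis using U(1,2) continuous_on_eq_continuous_at by blast
qed

theorem lemma7:
  fixes f :: "real ^ 'n \<Rightarrow> real ^ 'm \<Rightarrow> real ^ 'n"
    and V :: "real ^ 'n \<Rightarrow> real"
    and N :: nat and c r :: "nat \<Rightarrow> real"
    and \<sigma> :: "real \<Rightarrow> real"
  assumes f_cont: "continuous_on UNIV (\<lambda>(x, u). f x u)"
    and f_zero: "f 0 0 = 0"
    and V_lyap: "FxT_ISS_Lyapunov f V"
    and \<sigma>_def: "\<sigma> = (\<lambda>s. \<Sum>i<N. c i * s powr r i)"
    and r_ge1: "N > 0 \<Longrightarrow> r 0 \<ge> 1"
    and r_incr: "\<And>i j. i < j \<Longrightarrow> j < N \<Longrightarrow> r i < r j"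
    and c_nz: "\<And>i. i < N \<Longrightarrow> c i \<noteq> 0"
    and \<sigma>_K: "class_K_inf \<sigma>"
    and \<sigma>_deriv: "\<And>s. s > 0 \<Longrightarrow> deriv \<sigma> s > 0"
  shows "FxT_ISS_Lyapunov f (\<lambda>x. \<sigma> (V x))"
proof -
  have seq: "\<sigma> = sgm N c r" unfolding \<sigma>_def sgm_def[abs_def] ..
  have sK: "continuous_on {0..} \<sigma>" "strict_mono_on {0..} \<sigma>" "\<sigma> 0 = 0"
    using \<sigma>_K unfolding class_K_inf_def by auto
  have Npos: "N > 0"
  proof (rule ccontr)
    assume "\<not> N > 0"
    hence "\<sigma> = (\<lambda>s. 0)" unfolding \<sigma>_def by simp
    moreover have "\<sigma> 0 < \<sigma> 1" using strict_mono_onD[OF sK(2), of 0 1] by simp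
    ultimately show False by simp
  qed
  have rge1: "r i \<ge> 1" if "i < N" for i
  proof (cases "i = 0")
    case True thus ?thesis using r_ge1 Npos by simp
  next
    case False thus ?thesis using r_incr[of 0 i] r_ge1 Npos that by fastforce
  qed
  have sder: "DERIV \<sigma> s :> dsg N c r s" if "s > 0" for s
    unfolding seq using sgm_deriv[where N=N and c=c and r=r, OF rge1 that] by blast
  have dpos: "dsg N c r s > 0" if "s > 0" for s
    using \<sigma>_deriv[OF that] DERIV_imp_deriv[OF sder[OF that]] by simp
  have smono: "\<sigma> x \<le> \<sigma> y" if "0 \<le> x" "x \<le> y" for x y
    using strict_mono_on_leD[OF sK(2), of x y] that by simp
  have snn: "\<sigma> s \<ge> 0" if "s \<ge> 0" for s using smono[of 0 s] sK(3) that by simp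
  have slip: "\<exists>K\<ge>0. K-lipschitz_on {0..M} \<sigma>" if "M \<ge> 0" for M
    unfolding seq using sgm_lip[where N=N and c=c and r=r, OF rge1 that] by blast
  obtain \<alpha>l \<alpha>u gain \<Psi> where
    VL: "locally_lipschitz V" "\<And>x. V x \<ge> 0"
    and K: "class_K_inf \<alpha>l" "class_K_inf \<alpha>u" "class_K_inf gain" "class_K_FxT \<Psi>"
    and bnd: "\<And>x. \<alpha>l (norm x) \<le> V x \<and> V x \<le> \<alpha>u (norm x)"
    and dec: "\<And>x u. V x \<ge> gain (norm u) \<Longrightarrow> dini_deriv V x (f x u) \<le> ereal (- \<Psi> (V x))"
    using V_lyap unfolding FxT_ISS_Lyapunov_def by blast
  obtain c1 c2 p1 p2 where cp: "c1 > 0" "c2 > 0" "0 < p1" "p1 < 1" "p2 > 1"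
    and \<Psi>: "\<Psi> = (\<lambda>s. c1 * s powr p1 + c2 * s powr p2)"
    using K(4) unfolding class_K_FxT_def by blast
  obtain e q1 q2 where eq: "e > 0" "0 < q1" "q1 < 1" "q2 > 1"
    and psb: "\<And>s. s > 0 \<Longrightarrow> e * sgm N c r s powr q1 + e * sgm N c r s powr q2
        \<le> dsg N c r s * (c1 * s powr p1 + c2 * s powr p2)"
  proof -
    have snn': "0 \<le> sgm N c r s" if "0 \<le> s" for s using snn[OF that] unfolding seq .
    show ?thesis using psi_exists[where N=N and c=c and r=r, OF rge1 Npos r_incr c_nz dpos snn' cp] that by blast
  qed
  define \<Psi>t where "\<Psi>t = (\<lambda>t::real. e * t powr q1 + e * t powr q2)"
  have \<Psi>tK: "class_K_FxT \<Psi>t" unfolding class_K_FxT_def \<Psi>t_def using eq by blast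
  have anng: "\<alpha> x \<ge> 0" if "class_K_inf \<alpha>" "x \<ge> 0" for \<alpha> x
    using that strict_mono_on_leD[of "{0..}" \<alpha> 0 x] unfolding class_K_inf_def by auto
  have LL: "locally_lipschitz (\<lambda>x. \<sigma> (V x))"
    unfolding locally_lipschitz_def
  proof
    fix x
    obtain U L where U: "open U" "x \<in> U" "L-lipschitz_on U V"
      using VL(1) unfolding locally_lipschitz_def by blast
    have L0: "L \<ge> 0" using U(3) by (rule lipschitz_on_nonneg)
    define U' where "U' = U \<inter> ball x 1"
    have U': "open U'" "x \<in> U'" using U unfolding U'_def by auto
    have LU': "L-lipschitz_on U' V" using U(3) by (rule lipschitz_on_mono) (auto simp: U'_def)
    obtain K where K: "K \<ge> 0" "K-lipschitz_on {0..V x + L} \<sigma>" using slip[of "V x + L"] VL(2)[of x] L0 by auto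
    have img: "V ` U' \<subseteq> {0..V x + L}"
    proof
      fix z assume "z \<in> V ` U'"
      then obtain y where y: "y \<in> U'" "z = V y" by blast
      have "dist (V y) (V x) \<le> L * dist y x" using lipschitz_onD[OF LU' y(1) U'(2)] .
      moreover have "dist y x < 1" using y(1) unfolding U'_def by (auto simp: dist_commute)
      ultimately have "dist (V y) (V x) \<le> L" using L0 by (smt (verit) mult_left_le)
      thus "z \<in> {0..V x + L}" using y VL(2)[of y] by (auto simp: dist_real_def)
    qed
    have "(K * L)-lipschitz_on U' (\<lambda>y. \<sigma> (V y))"
      by (rule lipschitz_on_compose2[OF LU']) (rule lipschitz_on_mono[OF K(2) img order_refl])
    thus "\<exists>U. open U \<and> x \<in> U \<and> (\<exists>L. L-lipschitz_on U (\<lambda>x. \<sigma> (V x)))" using U' by blast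
  qed
  have DEC: "dini_deriv (\<lambda>x. \<sigma> (V x)) x (f x u) \<le> ereal (- \<Psi>t (\<sigma> (V x)))"
    if hyp: "\<sigma> (V x) \<ge> \<sigma> (gain (norm u))" for x u
  proof -
    have g0: "gain (norm u) \<ge> 0" using anng[OF K(3)] by simp
    have "V x \<ge> gain (norm u)"
    proof (rule ccontr)
      assume "\<not> V x \<ge> gain (norm u)"
      hence "\<sigma> (V x) < \<sigma> (gain (norm u))" using strict_mono_onD[OF sK(2), of "V x" "gain (norm u)"] VL(2)[of x] g0 by auto
      thus False using hyp by simp
    qed
    hence dV: "dini_deriv V x (f x u) \<le> ereal (- \<Psi> (V x))" by (rule dec)
    define v where "v = f x u"
    have tV: "((\<lambda>h. V (x + h *\<^sub>R v)) \<longlongrightarrow> V x) (at_right 0)"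
    proof -
      have "((\<lambda>h::real. x + h *\<^sub>R v) \<longlongrightarrow> x + 0 *\<^sub>R v) (at_right 0)" by (intro tendsto_intros)
      hence "((\<lambda>h::real. x + h *\<^sub>R v) \<longlongrightarrow> x) (at_right 0)" by simp
      thus ?thesis using isCont_tendsto_compose[OF loclip_isCont[OF VL(1)]] by blast
    qed
    show ?thesis
    proof (cases "V x > 0")
      case True
      have "dini_deriv (\<lambda>y. \<sigma> (V y)) x v \<le> ereal (dsg N c r (V x) * (- \<Psi> (V x)))"
        using dini_chain_pos[OF tV sder[OF True] dpos[OF True]] dV unfolding v_def by blast
      also have "dsg N c r (V x) * (- \<Psi> (V x)) \<le> - \<Psi>t (\<sigma> (V x))"
      proof -
        have h: "\<Psi>t (\<sigma> (V x)) \<le> dsg N c r (V x) * \<Psi> (V x)"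
          using psb[OF True] unfolding \<Psi> \<Psi>t_def seq by simp
        show ?thesis using h by simp
      qed
      finally show ?thesis unfolding v_def by simp
    next
      case False
      hence V0: "V x = 0" using VL(2)[of x] by simp
      obtain K where K1: "K \<ge> 0" "K-lipschitz_on {0..1} \<sigma>" using slip[of 1] by auto
      have sle: "\<sigma> y \<le> K * y" if "0 \<le> y" "y \<le> 1" for y
        using lipschitz_onD[OF K1(2), of y 0] that sK(3) by (auto simp: dist_real_def)
      have "\<Psi> 0 = 0" unfolding \<Psi> by simp
      hence dV0: "dini_deriv V x v \<le> ereal 0" using dV V0 unfolding v_def by simp
      have "dini_deriv (\<lambda>y. \<sigma> (V y)) x v \<le> ereal 0"
        by (rule dini_chain_zero[OF tV V0 VL(2) sK(3) K1(1) sle dV0])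
      moreover have "\<Psi>t (\<sigma> (V x)) = 0" unfolding V0 sK(3) \<Psi>t_def by simp
      ultimately show ?thesis unfolding v_def by simp
    qed
  qed
  show ?thesis unfolding FxT_ISS_Lyapunov_def
  proof (intro conjI exI)
    show "locally_lipschitz (\<lambda>x. \<sigma> (V x))" by (rule LL)
    show "\<forall>x. 0 \<le> \<sigma> (V x)" using snn VL(2) by blast
    show "class_K_inf (\<lambda>s. \<sigma> (\<alpha>l s))" by (rule Kinf_comp[OF \<sigma>_K K(1)])
    show "class_K_inf (\<lambda>s. \<sigma> (\<alpha>u s))" by (rule Kinf_comp[OF \<sigma>_K K(2)])
    show "class_K_inf (\<lambda>s. \<sigma> (gain s))" by (rule Kinf_comp[OF \<sigma>_K K(3)])
    show "class_K_FxT \<Psi>t" by (rule \<Psi>tK)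
    show "\<forall>x. \<sigma> (\<alpha>l (norm x)) \<le> \<sigma> (V x) \<and> \<sigma> (V x) \<le> \<sigma> (\<alpha>u (norm x))"
      using bnd smono anng[OF K(1)] VL(2) by auto
    show "\<forall>x u. \<sigma> (gain (norm u)) \<le> \<sigma> (V x) \<longrightarrow> dini_deriv (\<lambda>x. \<sigma> (V x)) x (f x u) \<le> ereal (- \<Psi>t (\<sigma> (V x)))"
      using DEC by blast
  qed
qed

end
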